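(* Let $r\ge 1$ and let $T=T_E=(p_1,\ldots,p_{r-1})$ be an untwisted multiplicity tree of a local Arf good semigroup $S(T)\subseteq\mathbb{N}^r$, where $E=\{M_1,\ldots,M_r\}$ is the ordered collection of multiplicity sequences along its branches. Then $$ g(S(T))=\sum_{k=1}^r g(\mathrm{AS}(M_k))+\sum_{k=1}^{r-1}p_k, $$ where $\mathrm{AS}(M_k)$ is the Arf numerical semigroup associated to $M_k$.
   Context: A multiplicity sequence is a nonincreasing sequence $(m_n)_{n\ge1}$ of positive integers, eventually equal to $1$, such that for every $n$ there is $l(n)\ge n+1$ with $m_n=\sum_{k=n+1}^{l(n)}m_k$. It is written $M=[m_1,\ldots,m_k]$ with $m_k$ its last entry different from $1$ (and $M=[1]$ for the constant sequence); $l(M)=k$ is its length and $M[i]=m_i$. Its associated Arf numerical semigroup is $\mathrm{AS}(M)=\{0,m_1,m_1+m_2,\ldots,m_1+\cdots+m_k\}\cup\{n: n\ge m_1+\cdots+m_k\}$ (and $\mathrm{AS}([1])=\mathbb{N}$). The genus of a numerical semigroup $S$ is $|\mathbb{N}\setminus S|$. A good semigroup $S\subseteq\mathbb{N}^r$ is a submonoid of $(\mathbb{N}^r,+)$ such that: (i) $\min(a,b)\in S$ (componentwise) for $a,b\in S$; (ii) if $a,b\in S$ with $a[i]=b[i]$, there is $c\in S$ with $c[i]>a[i]$, $c[j]\ge\min(a[j],b[j])$ for $j\ne i$, and $c[j]=\min(a[j],b[j])$ whenever $a[j]\ne b[j]$; (iii) there is $\delta$ with $\delta+\mathbb{N}^r\subseteq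 S$. The minimal such $\delta=(c[1],\ldots,c[r])$ is the conductor. $S$ is local if $\mathbf 0$ is the only element of $S$ with some zero coordinate, and Arf if $\{\beta\in S:\beta\ge\alpha\}-\alpha$ is a semigroup for every $\alpha\in S$ (usual partial order on $\mathbb{N}^r$). The genus of a good semigroup $S$ with conductor $\delta$ is $g(S)=\sum_{k=1}^r c[k]-d(S\setminus C)$, where $C=\delta+\mathbb{N}^r$ and $d(S\setminus C)$ is the length $n$ of a saturated chain $\mathbf 0=s_0<s_1<\cdots<s_n=\delta$ in $S$ (one that cannot be refined inside $S$). The multiplicity tree of a local Arf good semigroup $S\subseteq\mathbb{N}^r$ is a rooted tree with $r$ branches whose nodes $\mathbf n_i^j\in\mathbb{N}^r$ (node on branch $i$, level $j$; all branches share the root at level 1) satisfy $S=\{\mathbf 0\}\cup\{\sum_{\mathbf n\in T'}\mathbf n : T'$ a finite subtree rooted at the root$\}$; the $i$-th coordinates of the nodes along branch $i$ form a multiplicity sequence $M_i$, and $\mathbf n_i^j[h]=0$ iff the node is not on branch $h$. Such a tree is described by $E=\{M_1,\ldots,M_r\}$ and the numbers $p_{i,j}$ = highest level at which branches $i$ and $j$ are glued. The tree is untwisted if $p_{i,j}=\min\{p_{i,i+1},\ldots,p_{j-1,j}\}$ for all $i<j$; it is then denoted $T_E=(p_1,\ldots,p_{r-1})$ with $p_i=p_{i,i+1}$, and $S(T)$ denotes the associated semigroup. *)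

theory Defs
  imports Main
begin

text \<open>A sequence is a function nat => nat, indexed from 1 (the value at 0 is ignored).\<close>

definition multiplicity_sequence :: "(nat \<Rightarrow> nat) \<Rightarrow> bool" where
  "multiplicity_sequence m \<longleftrightarrow>
     (\<forall>n\<ge>1. m n > 0) \<and>
     (\<forall>n\<ge>1. m (Suc n) \<le> m n) \<and>
     (\<exists>N\<ge>1. \<forall>n\<ge>N. m n = 1) \<and>
     (\<forall>n\<ge>1. \<exists>l\<ge>n+1. m n = (\<Sum>k=n+1..l. m k))"

definition ms_length :: "(nat \<Rightarrow> nat) \<Rightarrow> nat" where
  "ms_length m = (if \<forall>n\<ge>1. m n = 1 then 0 else (GREATEST n. n \<ge> 1 \<and> m n \<noteq> 1))"

definition AS :: "(nat \<Rightarrow> nat) \<Rightarrow> nat set" where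
  "AS m = {\<Sum>i=1..j. m i | j. j \<le> ms_length m} \<union> {n. n \<ge> (\<Sum>i=1..ms_length m. m i)}"

definition ns_genus :: "nat set \<Rightarrow> nat" where
  "ns_genus S = card (UNIV - S)"

text \<open>Elements of N^r are functions nat => nat vanishing outside {..<r};
  the order on functions is the componentwise order.\<close>

definition vecs :: "nat \<Rightarrow> (nat \<Rightarrow> nat) set" where
  "vecs r = {v. \<forall>i\<ge>r. v i = 0}"

definition good_semigroup :: "nat \<Rightarrow> (nat \<Rightarrow> nat) set \<Rightarrow> bool" where
  "good_semigroup r S \<longleftrightarrow>
     S \<subseteq> vecs r \<and> (\<lambda>_. 0) \<in> S \<and>
     (\<forall>a\<in>S. \<forall>b\<in>S. (\<lambda>i. a i + b i) \<in> S) \<and>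
     (\<forall>a\<in>S. \<forall>b\<in>S. (\<lambda>i. min (a i) (b i)) \<in> S) \<and>
     (\<forall>a\<in>S. \<forall>b\<in>S. \<forall>i<r. a i = b i \<longrightarrow>
        (\<exists>c\<in>S. c i > a i \<and>
           (\<forall>j<r. j \<noteq> i \<longrightarrow> c j \<ge> min (a j) (b j)) \<and>
           (\<forall>j<r. j \<noteq> i \<and> a j \<noteq> b j \<longrightarrow> c j = min (a j) (b j)))) \<and>
     (\<exists>d\<in>vecs r. \<forall>v\<in>vecs r. d \<le> v \<longrightarrow> v \<in> S)"

definition local_sg :: "nat \<Rightarrow> (nat \<Rightarrow> nat) set \<Rightarrow> bool" where
  "local_sg r S \<longleftrightarrow> (\<forall>a\<in>S. (\<exists>i<r. a i = 0) \<longrightarrow> a = (\<lambda>_. 0))"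

definition arf_sg :: "(nat \<Rightarrow> nat) set \<Rightarrow> bool" where
  "arf_sg S \<longleftrightarrow> (\<forall>\<alpha>\<in>S. \<forall>\<beta>\<in>S. \<forall>\<gamma>\<in>S. \<alpha> \<le> \<beta> \<longrightarrow> \<alpha> \<le> \<gamma> \<longrightarrow>
      (\<lambda>i. \<beta> i + \<gamma> i - \<alpha> i) \<in> S)"

definition conductor :: "nat \<Rightarrow> (nat \<Rightarrow> nat) set \<Rightarrow> (nat \<Rightarrow> nat)" where
  "conductor r S = (LEAST d. d \<in> vecs r \<and> (\<forall>v\<in>vecs r. d \<le> v \<longrightarrow> v \<in> S))"

definition sat_chain :: "(nat \<Rightarrow> nat) set \<Rightarrow> nat \<Rightarrow> (nat \<Rightarrow> nat \<Rightarrow> nat) \<Rightarrow> (nat \<Rightarrow> nat) \<Rightarrow> bool" where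
  "sat_chain S n s d \<longleftrightarrow> s 0 = (\<lambda>_. 0) \<and> s n = d \<and> (\<forall>i\<le>n. s i \<in> S) \<and>
     (\<forall>i<n. s i < s (Suc i) \<and> \<not> (\<exists>t\<in>S. s i < t \<and> t < s (Suc i)))"

definition good_genus :: "nat \<Rightarrow> (nat \<Rightarrow> nat) set \<Rightarrow> nat" where
  "good_genus r S = (\<Sum>k<r. conductor r S k)
      - (SOME n. \<exists>s. sat_chain S n s (conductor r S))"

text \<open>Branches 0..r-1, levels 1,2,...; branch k carries multiplicity sequence M k;
  p k (k < r-1) is the highest level where branches k and k+1 are glued.
  Untwisted: branches i, h are glued up to level min of p over [min i h, max i h).\<close>

definition glue :: "(nat \<Rightarrow> nat) \<Rightarrow> nat \<Rightarrow> nat \<Rightarrow> nat" where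
  "glue p i h = Min (p ` {min i h..<max i h})"

definition on_branch :: "nat \<Rightarrow> (nat \<Rightarrow> nat) \<Rightarrow> nat \<Rightarrow> nat \<Rightarrow> nat \<Rightarrow> bool" where
  "on_branch r p i j h \<longleftrightarrow> h < r \<and> (h = i \<or> j \<le> glue p i h)"

text \<open>The node at level j on branch i, identified by its level and the set of branches through it.\<close>
definition node :: "nat \<Rightarrow> (nat \<Rightarrow> nat) \<Rightarrow> nat \<Rightarrow> nat \<Rightarrow> nat \<times> nat set" where
  "node r p i j = (j, {h. on_branch r p i j h})"

definition tree_nodes :: "nat \<Rightarrow> (nat \<Rightarrow> nat) \<Rightarrow> (nat \<times> nat set) set" where
  "tree_nodes r p = {node r p i j | i j. i < r \<and> j \<ge> 1}"

definition node_vec :: "(nat \<Rightarrow> nat \<Rightarrow> nat) \<Rightarrow> nat \<times> nat set \<Rightarrow> (nat \<Rightarrow> nat)" where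
  "node_vec M nd = (\<lambda>h. if h \<in> snd nd then M h (fst nd) else 0)"

definition rooted_subtree :: "nat \<Rightarrow> (nat \<Rightarrow> nat) \<Rightarrow> (nat \<times> nat set) set \<Rightarrow> bool" where
  "rooted_subtree r p N \<longleftrightarrow> finite N \<and> N \<subseteq> tree_nodes r p \<and> node r p 0 1 \<in> N \<and>
     (\<forall>i<r. \<forall>j\<ge>1. node r p i (Suc j) \<in> N \<longrightarrow> node r p i j \<in> N)"

definition tree_semigroup :: "nat \<Rightarrow> (nat \<Rightarrow> nat \<Rightarrow> nat) \<Rightarrow> (nat \<Rightarrow> nat) \<Rightarrow> (nat \<Rightarrow> nat) set" where
  "tree_semigroup r M p = {\<lambda>_. 0} \<union>
     {(\<lambda>h. \<Sum>nd\<in>N. node_vec M nd h) | N. rooted_subtree r p N}"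

end

theory Submission
  imports Defs
begin

definition conn :: "(nat \<Rightarrow> nat) \<Rightarrow> nat \<Rightarrow> nat \<Rightarrow> nat \<Rightarrow> bool" where
  "conn p j i h \<longleftrightarrow> (\<forall>k. min i h \<le> k \<and> k < max i h \<longrightarrow> j \<le> p k)"

lemma conn_refl: "conn p j i i" by (auto simp: conn_def)
lemma conn_sym: "conn p j i h \<Longrightarrow> conn p j h i" by (auto simp: conn_def min.commute max.commute)
lemma conn_trans: "conn p j i h \<Longrightarrow> conn p j h g \<Longrightarrow> conn p j i g"
  unfolding conn_def
proof (intro allI impI)
  fix k assume a: "\<forall>k. min i h \<le> k \<and> k < max i h \<longrightarrow> j \<le> p k"
     "\<forall>k. min h g \<le> k \<and> k < max h g \<longrightarrow> j \<le> p k" and b: "min i g \<le> k \<and> k < max i g"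
  from b have "(min i h \<le> k \<and> k < max i h) \<or> (min h g \<le> k \<and> k < max h g)" by (auto simp: min_def max_def split: if_splits)
  then show "j \<le> p k" using a by blast
qed
lemma conn_Suc: "conn p j k (Suc k) \<longleftrightarrow> j \<le> p k"
  unfolding conn_def by (auto, metis le_antisym less_Suc_eq_le)
lemma conn_mono: "j' \<le> j \<Longrightarrow> conn p j i h \<Longrightarrow> conn p j' i h" by (auto simp: conn_def)
lemma conn_sub: "min i h \<le> min a b \<Longrightarrow> max a b \<le> max i h \<Longrightarrow> conn p j i h \<Longrightarrow> conn p j a b"
  unfolding conn_def by (meson le_trans less_le_trans)
lemma conn_one: "\<forall>k. k + 1 < r \<longrightarrow> p k \<ge> 1 \<Longrightarrow> i < r \<Longrightarrow> h < r \<Longrightarrow> conn p 1 i h"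
  unfolding conn_def by auto

lemma on_branch_conn: "on_branch r p i j h \<longleftrightarrow> h < r \<and> conn p j i h"
proof (cases "h = i")
  case True then show ?thesis by (auto simp: on_branch_def conn_refl)
next
  case False
  then have ne: "{min i h..<max i h} \<noteq> {}" by (simp add: min_def max_def)
  have "j \<le> glue p i h \<longleftrightarrow> (\<forall>k\<in>{min i h..<max i h}. j \<le> p k)"
    unfolding glue_def using ne by (simp add: Min_ge_iff)
  then show ?thesis using False by (auto simp: on_branch_def conn_def)
qed

lemma node_alt: "node r p i j = (j, {h. h < r \<and> conn p j i h})"
  by (simp add: node_def on_branch_conn)

lemma node_eq: "i < r \<Longrightarrow> i' < r \<Longrightarrow> node r p i j = node r p i' j' \<longleftrightarrow> j = j' \<and> conn p j i i'"
proof
  assume a: "i < r" "i' < r" "node r p i j = node r p i' j'"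
  then have jj: "j = j'" by (simp add: node_alt)
  have "i' \<in> snd (node r p i' j')" using a by (simp add: node_alt conn_refl)
  then have "i' \<in> snd (node r p i j)" using a by simp
  then show "j = j' \<and> conn p j i i'" using jj by (simp add: node_alt)
next
  assume a: "i < r" "i' < r" "j = j' \<and> conn p j i i'"
  then show "node r p i j = node r p i' j'"
    by (auto simp: node_alt intro: conn_trans conn_sym)
qed

definition sg :: "(nat \<Rightarrow> nat) \<Rightarrow> nat \<Rightarrow> nat" where
  "sg m x = (\<Sum>i=1..x. m i)"

definition lval :: "nat \<Rightarrow> (nat \<Rightarrow> nat \<Rightarrow> nat) \<Rightarrow> (nat \<Rightarrow> nat) \<Rightarrow> (nat \<Rightarrow> nat)" where
  "lval r M e = (\<lambda>h. if h < r then sg (M h) (e h) else 0)"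

definition adj :: "nat \<Rightarrow> (nat \<Rightarrow> nat) \<Rightarrow> (nat \<Rightarrow> nat) \<Rightarrow> bool" where
  "adj r p e \<longleftrightarrow> (\<forall>k. Suc k < r \<longrightarrow> min (e k) (p k) = min (e (Suc k)) (p k))"

definition E0 :: "nat \<Rightarrow> (nat \<Rightarrow> nat) \<Rightarrow> (nat \<Rightarrow> nat) set" where
  "E0 r p = {e. e \<in> vecs r \<and> (e = (\<lambda>_. 0) \<or> (\<forall>i<r. 1 \<le> e i)) \<and> adj r p e}"

definition NN :: "nat \<Rightarrow> (nat \<Rightarrow> nat) \<Rightarrow> (nat \<Rightarrow> nat) \<Rightarrow> (nat \<times> nat set) set" where
  "NN r p e = (\<lambda>(i,j). node r p i j) ` (SIGMA i:{..<r}. {1..e i})"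

lemma NN_mem: "nd \<in> NN r p e \<longleftrightarrow> (\<exists>i j. i < r \<and> 1 \<le> j \<and> j \<le> e i \<and> nd = node r p i j)"
  unfolding NN_def by force

lemma finite_NN: "finite (NN r p e)"
  unfolding NN_def by auto

lemma sg_Suc: "sg m (Suc x) = sg m x + m (Suc x)"
  unfolding sg_def by simp

lemma sg_0[simp]: "sg m 0 = 0"
  unfolding sg_def by simp

lemma prop_right:
  assumes "adj r p e"
  shows "i + d < r \<Longrightarrow> conn p j i (i+d) \<Longrightarrow> j \<le> e i \<Longrightarrow> j \<le> e (i+d)"
proof (induction d)
  case 0 then show ?case by simp
next
  case (Suc d)
  have c1: "conn p j i (i+d)" using Suc.prems(2) by (rule conn_sub[rotated 2]) auto
  have c2: "conn p j (i+d) (Suc (i+d))" using Suc.prems(2) by (rule conn_sub[rotated 2]) auto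
  then have jp: "j \<le> p (i+d)" by (simp add: conn_Suc)
  have "j \<le> e (i+d)" using Suc c1 by simp
  moreover have "min (e (i+d)) (p (i+d)) = min (e (Suc (i+d))) (p (i+d))"
    using assms Suc.prems(1) by (simp add: adj_def)
  ultimately show ?case using jp by (metis add_Suc_right min.bounded_iff)
qed

lemma prop_left:
  assumes "adj r p e"
  shows "h + d < r \<Longrightarrow> conn p j (h+d) h \<Longrightarrow> j \<le> e (h+d) \<Longrightarrow> j \<le> e h"
proof (induction d arbitrary: h)
  case 0 then show ?case by simp
next
  case (Suc d)
  have c1: "conn p j (Suc h + d) (Suc h)" using Suc.prems(2) by (rule conn_sub[rotated 2]) auto
  have c2: "conn p j h (Suc h)" using Suc.prems(2) by (rule conn_sub[rotated 2]) auto
  then have jp: "j \<le> p h" by (simp add: conn_Suc)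
  have "j \<le> e (Suc h)" using Suc.IH[of "Suc h"] Suc.prems c1 by simp
  moreover have "min (e h) (p h) = min (e (Suc h)) (p h)"
    using assms Suc.prems(1) by (simp add: adj_def)
  ultimately show ?case using jp by (metis min.bounded_iff)
qed

lemma propag:
  assumes "adj r p e" "i < r" "h < r" "conn p j i h" "j \<le> e i"
  shows "j \<le> e h"
proof (cases "i \<le> h")
  case True
  then obtain d where "h = i + d" using le_Suc_ex by blast
  then show ?thesis using prop_right[OF assms(1), of i d j] assms by simp
next
  case False
  then obtain d where "i = h + d" by (metis le_Suc_ex nat_le_linear)
  then show ?thesis using prop_left[OF assms(1), of h d j] assms by simp
qed

lemma NN_iff:
  assumes "adj r p e" "i < r" "1 \<le> j"
  shows "node r p i j \<in> NN r p e \<longleftrightarrow> j \<le> e i"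
proof
  assume "node r p i j \<in> NN r p e"
  then obtain i' j' where "i' < r" "1 \<le> j'" "j' \<le> e i'" "node r p i j = node r p i' j'"
    by (auto simp: NN_mem)
  then have "j = j'" "conn p j i i'" using node_eq assms(2) by blast+
  then show "j \<le> e i" using propag[OF assms(1) \<open>i' < r\<close> assms(2) conn_sym] \<open>j' \<le> e i'\<close> by blast
next
  assume "j \<le> e i" then show "node r p i j \<in> NN r p e" using assms by (auto simp: NN_mem)
qed

lemma snd_node_sub: "snd (node r p i j) \<subseteq> {..<r}"
  by (auto simp: node_alt)

lemma sum_NN:
  assumes "adj r p e"
  shows "(\<lambda>h. \<Sum>nd\<in>NN r p e. node_vec M nd h) = lval r M e"
proof
  fix h
  show "(\<Sum>nd\<in>NN r p e. node_vec M nd h) = lval r M e h"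
  proof (cases "h < r")
    case False
    have "\<forall>nd\<in>NN r p e. node_vec M nd h = 0"
      using False by (auto simp: NN_mem node_vec_def node_alt)
    then show ?thesis using False by (simp add: lval_def)
  next
    case True
    have "(\<Sum>nd\<in>NN r p e. node_vec M nd h) = (\<Sum>nd\<in>{nd\<in>NN r p e. h \<in> snd nd}. M h (fst nd))"
      by (simp add: node_vec_def sum.inter_filter[OF finite_NN, symmetric])
    also have "{nd\<in>NN r p e. h \<in> snd nd} = (\<lambda>j. node r p h j) ` {1..e h}"
    proof (rule set_eqI, rule iffI)
      fix nd assume "nd \<in> {nd\<in>NN r p e. h \<in> snd nd}"
      then obtain i j where ij: "i < r" "1 \<le> j" "j \<le> e i" "nd = node r p i j" "h \<in> snd nd"
        by (auto simp: NN_mem)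
      then have c: "conn p j i h" by (simp add: node_alt)
      then have "nd = node r p h j" using ij node_eq True by blast
      moreover have "j \<le> e h" using propag[OF assms ij(1) True c ij(3)] .
      ultimately show "nd \<in> (\<lambda>j. node r p h j) ` {1..e h}" using ij by auto
    next
      fix nd assume "nd \<in> (\<lambda>j. node r p h j) ` {1..e h}"
      then show "nd \<in> {nd\<in>NN r p e. h \<in> snd nd}"
        using True by (auto simp: NN_mem node_alt conn_refl)
    qed
    also have "(\<Sum>nd\<in>(\<lambda>j. node r p h j) ` {1..e h}. M h (fst nd)) = (\<Sum>j\<in>{1..e h}. M h j)"
      by (subst sum.reindex) (auto simp: inj_on_def node_alt)
    finally show ?thesis using True by (simp add: lval_def sg_def)
  qed
qed

lemma lval_zero: "lval r M (\<lambda>_. 0) = (\<lambda>_. 0)"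
  by (auto simp: lval_def)

lemma down_closed:
  assumes "rooted_subtree r p N" "h < r"
  shows "1 \<le> j \<Longrightarrow> node r p h (j + d) \<in> N \<Longrightarrow> node r p h j \<in> N"
proof (induction d)
  case 0 then show ?case by simp
next
  case (Suc d)
  have "node r p h (j + d) \<in> N"
    using assms Suc.prems by (auto simp: rooted_subtree_def)
  then show ?case using Suc by simp
qed

lemma S_char:
  assumes r1: "r \<ge> 1" and hp: "\<forall>k. k + 1 < r \<longrightarrow> p k \<ge> 1"
  shows "tree_semigroup r M p = lval r M ` E0 r p"
proof
  show "lval r M ` E0 r p \<subseteq> tree_semigroup r M p"
  proof
    fix x assume "x \<in> lval r M ` E0 r p"
    then obtain e where e: "e \<in> E0 r p" "x = lval r M e" by blast
    then have ad: "adj r p e" by (simp add: E0_def)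
    show "x \<in> tree_semigroup r M p"
    proof (cases "e = (\<lambda>_. 0)")
      case True then show ?thesis using e by (simp add: lval_zero tree_semigroup_def)
    next
      case False
      then have pos: "\<forall>i<r. 1 \<le> e i" using e by (simp add: E0_def)
      have "rooted_subtree r p (NN r p e)"
        unfolding rooted_subtree_def
      proof (intro conjI allI impI)
        show "finite (NN r p e)" by (rule finite_NN)
        show "NN r p e \<subseteq> tree_nodes r p" 
        proof
          fix nd assume "nd \<in> NN r p e"
          then obtain i j where "i < r" "1 \<le> j" "nd = node r p i j" by (auto simp: NN_mem)
          then show "nd \<in> tree_nodes r p" unfolding tree_nodes_def by blast
        qed
        show "node r p 0 1 \<in> NN r p e" using NN_iff[OF ad, of 0 1] r1 pos by simp
        fix i j assume "i < r" "1 \<le> j" "node r p i (Suc j) \<in> NN r p e"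
        then show "node r p i j \<in> NN r p e" using NN_iff[OF ad] by simp
      qed
      then have "(\<lambda>h. \<Sum>nd\<in>NN r p e. node_vec M nd h) \<in> tree_semigroup r M p"
        unfolding tree_semigroup_def by blast
      then show ?thesis using e sum_NN[OF ad, of M] by simp
    qed
  qed
next
  show "tree_semigroup r M p \<subseteq> lval r M ` E0 r p"
  proof
    fix x assume "x \<in> tree_semigroup r M p"
    then consider "x = (\<lambda>_. 0)" | N where "rooted_subtree r p N" "x = (\<lambda>h. \<Sum>nd\<in>N. node_vec M nd h)"
      unfolding tree_semigroup_def by blast
    then show "x \<in> lval r M ` E0 r p"
    proof cases
      case 1
      have "(\<lambda>_. 0::nat) \<in> E0 r p" by (simp add: E0_def vecs_def adj_def)
      then show ?thesis using 1 lval_zero by (metis image_eqI)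
    next
      case 2
      note N = 2
      define A where "A h = {j. node r p h j \<in> N}" for h
      define e where "e h = (if h < r then Max (A h) else 0)" for h
      have finA: "finite (A h)" for h
      proof -
        have "A h \<subseteq> fst ` N" unfolding A_def by (force simp: node_alt)
        then show ?thesis using N(1) finite_subset by (auto simp: rooted_subtree_def)
      qed
      have root: "node r p 0 1 \<in> N" using N(1) by (simp add: rooted_subtree_def)
      have oneA: "1 \<in> A h" if "h < r" for h
      proof -
        have "node r p h 1 = node r p 0 1" using node_eq[of h r 0] conn_one[OF hp] that r1 by auto
        then show ?thesis using root by (simp add: A_def)
      qed
      have iff: "node r p h j \<in> N \<longleftrightarrow> j \<le> e h" if "h < r" "1 \<le> j" for h j
      proof
        assume "node r p h j \<in> N"
        then show "j \<le> e h" using finA that by (simp add: e_def A_def)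
      next
        assume "j \<le> e h"
        have "e h \<in> A h" using finA oneA that by (auto simp: e_def intro: Max_in)
        then have "node r p h (j + (e h - j)) \<in> N" using \<open>j \<le> e h\<close> by (simp add: A_def)
        then show "node r p h j \<in> N" using down_closed[OF N(1) that(1) that(2)] by blast
      qed
      have epos: "1 \<le> e h" if "h < r" for h
        using finA oneA that by (auto simp: e_def intro: Max_ge)
      have NNeq: "N = NN r p e"
      proof
        show "N \<subseteq> NN r p e"
        proof
          fix nd assume "nd \<in> N"
          then obtain i j where "i < r" "1 \<le> j" "nd = node r p i j"
            using N(1) by (auto simp: rooted_subtree_def tree_nodes_def)
          then show "nd \<in> NN r p e" using iff \<open>nd \<in> N\<close> by (auto simp: NN_mem)
        qed
      next
        show "NN r p e \<subseteq> N" using iff by (auto simp: NN_mem)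
      qed
      have ad: "adj r p e"
        unfolding adj_def
      proof (intro allI impI)
        fix k assume k: "Suc k < r"
        have pk: "1 \<le> p k" using hp k by simp
        have c: "conn p m k (Suc k) \<longleftrightarrow> m \<le> p k" for m by (simp add: conn_Suc)
        have ne: "node r p k m = node r p (Suc k) m" if "m \<le> p k" for m
          using node_eq[of k r "Suc k" p m m] k c that by simp
        define m1 where "m1 = min (e k) (p k)"
        define m2 where "m2 = min (e (Suc k)) (p k)"
        have "1 \<le> m1" "1 \<le> m2" using epos k pk by (auto simp: m1_def m2_def)
        have "m1 \<le> e (Suc k)"
          using iff[of k m1] iff[of "Suc k" m1] ne[of m1] k \<open>1 \<le> m1\<close> by (simp add: m1_def)
        then have "m1 \<le> m2" by (simp add: m1_def m2_def)
        have "m2 \<le> e k"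
          using iff[of k m2] iff[of "Suc k" m2] ne[of m2] k \<open>1 \<le> m2\<close> by (simp add: m2_def)
        then have "m2 \<le> m1" by (simp add: m1_def m2_def)
        show "min (e k) (p k) = min (e (Suc k)) (p k)"
          using \<open>m1 \<le> m2\<close> \<open>m2 \<le> m1\<close> by (simp add: m1_def m2_def)
      qed
      have "e \<in> E0 r p" using ad epos by (auto simp: E0_def vecs_def e_def)
      moreover have "x = lval r M e" using N(2) NNeq sum_NN[OF ad] by simp
      ultimately show ?thesis by blast
    qed
  qed
qed

lemma ms_pos: "multiplicity_sequence m \<Longrightarrow> 1 \<le> n \<Longrightarrow> 0 < m n"
  by (simp add: multiplicity_sequence_def)

lemma ms_len:
  assumes ms: "multiplicity_sequence m"
  shows "(\<forall>n. ms_length m < n \<longrightarrow> m n = 1) \<and> (1 \<le> ms_length m \<longrightarrow> 2 \<le> m (ms_length m))"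
proof (cases "\<forall>n\<ge>1. m n = 1")
  case True then show ?thesis by (simp add: ms_length_def)
next
  case False
  then obtain k where k: "k \<ge> 1" "m k \<noteq> 1" by blast
  obtain N where N: "N \<ge> 1" "\<forall>n\<ge>N. m n = 1" using ms by (auto simp: multiplicity_sequence_def)
  define P where "P n \<longleftrightarrow> n \<ge> 1 \<and> m n \<noteq> 1" for n
  have b: "P y \<Longrightarrow> y \<le> N" for y using N by (metis P_def nat_le_linear)
  have l: "ms_length m = Greatest P" unfolding ms_length_def P_def by (rule if_not_P[OF False])
  have G: "P (Greatest P)" using GreatestI_nat[of P k N] k b by (auto simp: P_def)
  have "m n = 1" if "Greatest P < n" for n
  proof (rule ccontr)
    assume "m n \<noteq> 1"
    then have "P n" using that by (simp add: P_def)
    then have "n \<le> Greatest P" using Greatest_le_nat[of P n N] b by blast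
    then show False using that by simp
  qed
  moreover have "2 \<le> m (Greatest P)" using G ms_pos[OF ms, of "Greatest P"] by (simp add: P_def)
  ultimately show ?thesis using l by simp
qed

lemma ms_after: "multiplicity_sequence m \<Longrightarrow> ms_length m < n \<Longrightarrow> m n = 1"
  using ms_len by blast

lemma ms_at: "multiplicity_sequence m \<Longrightarrow> 1 \<le> ms_length m \<Longrightarrow> 2 \<le> m (ms_length m)"
  using ms_len by blast

lemma sg_strict: "multiplicity_sequence m \<Longrightarrow> strict_mono (sg m)"
  unfolding strict_mono_Suc_iff using ms_pos by (simp add: sg_Suc)

lemma sg_le_iff: "multiplicity_sequence m \<Longrightarrow> sg m x \<le> sg m y \<longleftrightarrow> x \<le> y"
  using sg_strict strict_mono_less_eq by blast

lemma sg_less_iff: "multiplicity_sequence m \<Longrightarrow> sg m x < sg m y \<longleftrightarrow> x < y"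
  using sg_strict strict_mono_less by blast

lemma sg_ge: "multiplicity_sequence m \<Longrightarrow> x \<le> sg m x"
proof (induction x)
  case 0 then show ?case by simp
next
  case (Suc x) then show ?case using ms_pos[OF Suc.prems, of "Suc x"] by (simp add: sg_Suc)
qed

lemma sg_tail:
  assumes "multiplicity_sequence m" "ms_length m \<le> x"
  shows "sg m (x + t) = sg m x + t"
proof (induction t)
  case 0 then show ?case by simp
next
  case (Suc t)
  have "m (Suc (x + t)) = 1" using ms_after[OF assms(1)] assms(2) by simp
  then show ?case using Suc by (simp add: sg_Suc)
qed

lemma ns_genus_AS:
  assumes ms: "multiplicity_sequence m"
  shows "ns_genus (AS m) = sg m (ms_length m) - ms_length m"
proof -
  define l where "l = ms_length m"
  have AS: "AS m = sg m ` {..l} \<union> {n. n \<ge> sg m l}"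
    unfolding AS_def l_def sg_def by auto
  have "UNIV - AS m = {..<sg m l} - sg m ` {..<l}"
  proof (rule set_eqI)
    fix n
    have "n \<in> sg m ` {..l} \<longleftrightarrow> n \<in> sg m ` {..<l} \<or> n = sg m l"
      by (auto simp: le_less)
    then show "n \<in> UNIV - AS m \<longleftrightarrow> n \<in> {..<sg m l} - sg m ` {..<l}"
      unfolding AS by auto
  qed
  moreover have "sg m ` {..<l} \<subseteq> {..<sg m l}" using sg_less_iff[OF ms] by auto
  moreover have "card (sg m ` {..<l}) = l"
    using sg_strict[OF ms] by (simp add: card_image strict_mono_imp_inj_on)
  ultimately show ?thesis unfolding ns_genus_def l_def[symmetric]
    by (simp add: card_Diff_subset)
qed

lemma lval_le_iff:
  assumes hM: "\<forall>k<r. multiplicity_sequence (M k)" and "e \<in> vecs r" "f \<in> vecs r"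
  shows "lval r M e \<le> lval r M f \<longleftrightarrow> e \<le> f"
proof
  assume a: "lval r M e \<le> lval r M f"
  show "e \<le> f" unfolding le_fun_def
  proof
    fix h show "e h \<le> f h"
    proof (cases "h < r")
      case True
      then have "sg (M h) (e h) \<le> sg (M h) (f h)" using a by (auto simp: le_fun_def lval_def dest: spec[of _ h])
      then show ?thesis using sg_le_iff hM True by blast
    next
      case False then show ?thesis using assms by (simp add: vecs_def)
    qed
  qed
next
  assume "e \<le> f"
  then show "lval r M e \<le> lval r M f"
    using sg_le_iff hM by (auto simp: le_fun_def lval_def)
qed

lemma lval_inj:
  assumes hM: "\<forall>k<r. multiplicity_sequence (M k)" and "e \<in> vecs r" "f \<in> vecs r"
    and "lval r M e = lval r M f"
  shows "e = f"
  using lval_le_iff[OF assms(1-3)] lval_le_iff[OF assms(1) assms(3) assms(2)] assms(4)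
  by (simp add: order.antisym)

lemma lval_less_iff:
  assumes hM: "\<forall>k<r. multiplicity_sequence (M k)" and "e \<in> vecs r" "f \<in> vecs r"
  shows "lval r M e < lval r M f \<longleftrightarrow> e < f"
  using lval_le_iff[OF assms] lval_inj[OF assms] by (auto simp: less_le)

lemma lval_vecs: "lval r M e \<in> vecs r"
  by (simp add: lval_def vecs_def)

definition Lv :: "nat \<Rightarrow> (nat \<Rightarrow> nat \<Rightarrow> nat) \<Rightarrow> (nat \<Rightarrow> nat) \<Rightarrow> nat \<Rightarrow> nat" where
  "Lv r M p h = (if h < r then max (ms_length (M h))
      (max (if 0 < h then p (h - 1) else 0) (if Suc h < r then p h else 0)) else 0)"

lemma Lv_ge:
  "h < r \<Longrightarrow> ms_length (M h) \<le> Lv r M p h"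
  "h < r \<Longrightarrow> 0 < h \<Longrightarrow> p (h - 1) \<le> Lv r M p h"
  "Suc h < r \<Longrightarrow> p h \<le> Lv r M p h"
  by (auto simp: Lv_def)

lemma Lv_cases:
  "h < r \<Longrightarrow> Lv r M p h = ms_length (M h) \<or> (0 < h \<and> Lv r M p h = p (h - 1))
     \<or> (Suc h < r \<and> Lv r M p h = p h) \<or> Lv r M p h = 0"
  by (auto simp: Lv_def max_def)

lemma Lv_pos:
  assumes hp: "\<forall>k. k + 1 < r \<longrightarrow> p k \<ge> 1" and "r \<ge> 2" "i < r"
  shows "1 \<le> Lv r M p i"
proof (cases "i = 0")
  case True
  have "1 \<le> p 0" using hp \<open>r \<ge> 2\<close> by simp
  moreover have "p 0 \<le> Lv r M p 0" using Lv_ge(3)[where h=0 and r=r and p=p and M=M] \<open>r \<ge> 2\<close> by simp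
  ultimately show ?thesis using True by simp
next
  case False
  have "1 \<le> p (i - 1)" using hp assms False by simp
  moreover have "p (i - 1) \<le> Lv r M p i" using Lv_ge(2)[where h=i and r=r and p=p and M=M] assms False by simp
  ultimately show ?thesis by simp
qed

lemma Lv_E0:
  assumes hp: "\<forall>k. k + 1 < r \<longrightarrow> p k \<ge> 1"
  shows "Lv r M p \<in> E0 r p"
proof -
  have v: "Lv r M p \<in> vecs r" by (simp add: vecs_def Lv_def)
  have ad: "adj r p (Lv r M p)"
    unfolding adj_def
  proof (intro allI impI)
    fix k assume k: "Suc k < r"
    have "p k \<le> Lv r M p k" using Lv_ge(3)[OF k] .
    moreover have "p k \<le> Lv r M p (Suc k)" using Lv_ge(2)[where h="Suc k" and r=r and p=p and M=M] k by simp
    ultimately show "min (Lv r M p k) (p k) = min (Lv r M p (Suc k)) (p k)" by simp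
  qed
  have "Lv r M p = (\<lambda>_. 0) \<or> (\<forall>i<r. 1 \<le> Lv r M p i)"
  proof (cases "r \<ge> 2")
    case True
    have "1 \<le> Lv r M p i" if "i < r" for i
    proof (cases "i = 0")
      case True
      have "1 \<le> p 0" using hp \<open>r \<ge> 2\<close> by simp
      moreover have "p 0 \<le> Lv r M p 0" using Lv_ge(3)[where h=0 and r=r and p=p and M=M] \<open>r \<ge> 2\<close> by simp
      ultimately show ?thesis using True by simp
    next
      case False
      have "1 \<le> p (i - 1)" using hp that False by simp
      moreover have "p (i - 1) \<le> Lv r M p i" using Lv_ge(2)[where h=i and r=r and p=p and M=M] that False by simp
      ultimately show ?thesis by simp
    qed
    then show ?thesis by blast
  next
    case False
    show ?thesis
    proof (cases "Lv r M p 0 = 0")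
      case True
      have "Lv r M p = (\<lambda>_. 0)"
      proof
        fix h show "Lv r M p h = 0" using True False by (cases "h = 0") (auto simp: Lv_def)
      qed
      then show ?thesis by blast
    next
      case F2: False
      have "1 \<le> Lv r M p i" if "i < r" for i
        using that False F2 by (cases i) auto
      then show ?thesis by blast
    qed
  qed
  then show ?thesis using v ad by (simp add: E0_def)
qed

lemma conductor_eq:
  assumes r1: "r \<ge> 1" and hM: "\<forall>k<r. multiplicity_sequence (M k)"
    and hp: "\<forall>k. k + 1 < r \<longrightarrow> p k \<ge> 1"
  shows "conductor r (tree_semigroup r M p) = lval r M (Lv r M p)"
proof -
  define L where "L = Lv r M p"
  have S: "tree_semigroup r M p = lval r M ` E0 r p" using S_char[OF r1 hp] .
  have LE: "L \<in> E0 r p" using Lv_E0[OF hp] by (simp add: L_def)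
  have hprop: "\<forall>v\<in>vecs r. lval r M L \<le> v \<longrightarrow> v \<in> tree_semigroup r M p"
  proof (intro ballI impI)
    fix v assume v: "v \<in> vecs r" "lval r M L \<le> v"
    define e where "e h = (if h < r then L h + (v h - sg (M h) (L h)) else 0)" for h
    have le: "sg (M h) (L h) \<le> v h" if "h < r" for h
      using v(2) that by (auto simp: le_fun_def lval_def dest: spec[of _ h])
    have lv: "lval r M e = v"
    proof
      fix h show "lval r M e h = v h"
      proof (cases "h < r")
        case True
        have "ms_length (M h) \<le> L h" using Lv_ge(1)[OF True] by (simp add: L_def)
        then have "sg (M h) (L h + (v h - sg (M h) (L h))) = sg (M h) (L h) + (v h - sg (M h) (L h))"
          using sg_tail hM True by blast
        then show ?thesis using True le[OF True] by (simp add: lval_def e_def)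
      next
        case False then show ?thesis using v(1) by (simp add: lval_def vecs_def)
      qed
    qed
    have eL: "L h \<le> e h" if "h < r" for h using that by (simp add: e_def)
    have ad: "adj r p e"
      unfolding adj_def
    proof (intro allI impI)
      fix k assume k: "Suc k < r"
      have "p k \<le> e k" using Lv_ge(3)[OF k, of p M] eL[of k] k by (simp add: L_def)
      moreover have "p k \<le> e (Suc k)" using Lv_ge(2)[where h="Suc k" and r=r and p=p and M=M] eL[of "Suc k"] k
        by (simp add: L_def)
      ultimately show "min (e k) (p k) = min (e (Suc k)) (p k)" by simp
    qed
    have ze: "e = (\<lambda>_. 0) \<or> (\<forall>i<r. 1 \<le> e i)"
    proof (cases "r \<ge> 2")
      case True
      then have "\<forall>i<r. 1 \<le> e i" using Lv_pos[OF hp True] eL by (metis L_def le_trans)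
      then show ?thesis by blast
    next
      case False
      then have r1': "r = 1" using r1 by simp
      show ?thesis
      proof (cases "e 0 = 0")
        case True
        have "e = (\<lambda>_. 0)"
        proof
          fix h show "e h = 0" using True r1' by (cases h) (auto simp: e_def)
        qed
        then show ?thesis by blast
      next
        case False then show ?thesis using r1' by auto
      qed
    qed
    have "e \<in> E0 r p" using ad ze by (simp add: E0_def vecs_def e_def)
    then show "v \<in> tree_semigroup r M p" using S lv by blast
  qed
  have mini: "lval r M L \<le> d" if d: "d \<in> vecs r" "\<forall>v\<in>vecs r. d \<le> v \<longrightarrow> v \<in> tree_semigroup r M p" for d
    unfolding le_fun_def
  proof
    fix h
    show "lval r M L h \<le> d h"
    proof (cases "h < r")
      case False then show ?thesis by (simp add: lval_def)
    next
      case True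
      have msh: "multiplicity_sequence (M h)" using hM True by simp
      show ?thesis
      proof (rule ccontr)
        assume "\<not> lval r M L h \<le> d h"
        then have dh: "d h < sg (M h) (L h)" using True by (simp add: lval_def)
        define v where "v g = (if g = h then sg (M h) (L h) - 1 else if g < r then d g + sg (M g) (L g) else 0)" for g
        have "v \<in> vecs r" using True by (simp add: v_def vecs_def)
        moreover have "d \<le> v" unfolding le_fun_def
        proof
          fix g show "d g \<le> v g" using dh d(1) by (auto simp: v_def vecs_def)
        qed
        ultimately have "v \<in> lval r M ` E0 r p" using d(2) S by auto
        then obtain e where e: "e \<in> E0 r p" "v = lval r M e" by blast
        have ad: "adj r p e" using e by (simp add: E0_def)
        have eh: "sg (M h) (e h) = sg (M h) (L h) - 1"
          using e(2) True by (auto simp: v_def lval_def dest: fun_cong[of _ _ h])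
        have ehL: "e h < L h" using eh dh sg_less_iff[OF msh] by (metis diff_less less_nat_zero_code nat_neq_iff zero_less_one)
        have eg: "L g \<le> e g" if "g < r" "g \<noteq> h" for g
        proof -
          have "sg (M g) (e g) = d g + sg (M g) (L g)"
            using e(2) that by (auto simp: v_def lval_def dest: fun_cong[of _ _ g])
          then show ?thesis using sg_le_iff hM that by (metis le_add2)
        qed
        consider "L h = ms_length (M h)" | "0 < h" "L h = p (h - 1)" | "Suc h < r" "L h = p h" | "L h = 0"
          using Lv_cases[OF True, of M p] by (auto simp: L_def)
        then show False
        proof cases
          case 1
          obtain q where q: "L h = Suc q" using ehL by (metis less_nat_zero_code not0_implies_Suc)
          have "2 \<le> M h (Suc q)" using ms_at[OF msh] 1 q by simp
          then have "sg (M h) q + 2 \<le> sg (M h) (L h)" using q by (simp add: sg_Suc)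
          moreover have "sg (M h) (e h) \<le> sg (M h) q" using ehL q sg_le_iff[OF msh] by simp
          ultimately show False using eh by simp
        next
          case 2
          have k: "Suc (h - 1) < r" using 2 True by simp
          have "min (e (h - 1)) (p (h - 1)) = min (e (Suc (h - 1))) (p (h - 1))"
            using ad k by (simp add: adj_def)
          moreover have "p (h - 1) \<le> e (h - 1)"
          proof -
            have a1: "L (h - 1) \<le> e (h - 1)" using eg[of "h - 1"] True 2 by simp
            have a2: "p (h - 1) \<le> L (h - 1)" using Lv_ge(3)[OF k, of p M] by (simp add: L_def)
            show ?thesis using a1 a2 by simp
          qed
          ultimately show False using ehL 2 by simp
        next
          case 3
          have "min (e h) (p h) = min (e (Suc h)) (p h)"
            using ad 3 by (simp add: adj_def)
          moreover have "p h \<le> e (Suc h)"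
            using Lv_ge(2)[where h="Suc h" and r=r and p=p and M=M] eg[of "Suc h"] 3 by (simp add: L_def)
          ultimately show False using ehL 3 by simp
        next
          case 4 then show False using ehL by simp
        qed
      qed
    qed
  qed
  have "lval r M L \<in> vecs r" by (rule lval_vecs)
  then show ?thesis unfolding conductor_def L_def[symmetric]
    using hprop mini by (intro Least_equality) auto
qed

lemma NN_zero: "NN r p (\<lambda>_. 0) = {}"
  by (auto simp: NN_mem)

lemma E0_adj: "e \<in> E0 r p \<Longrightarrow> adj r p e" by (simp add: E0_def)
lemma E0_vecs: "e \<in> E0 r p \<Longrightarrow> e \<in> vecs r" by (simp add: E0_def)

lemma NN_mono_iff:
  assumes "e \<in> E0 r p" "f \<in> E0 r p"
  shows "NN r p e \<subseteq> NN r p f \<longleftrightarrow> e \<le> f"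
proof
  assume a: "NN r p e \<subseteq> NN r p f"
  show "e \<le> f" unfolding le_fun_def
  proof
    fix h show "e h \<le> f h"
    proof (cases "h < r \<and> 1 \<le> e h")
      case True
      then have "node r p h (e h) \<in> NN r p e" using NN_iff[OF E0_adj[OF assms(1)]] by simp
      then show ?thesis using a NN_iff[OF E0_adj[OF assms(2)]] True by blast
    next
      case False
      then show ?thesis using E0_vecs[OF assms(1)] by (auto simp: vecs_def)
    qed
  qed
next
  assume ef: "e \<le> f" show "NN r p e \<subseteq> NN r p f"
  proof
    fix nd assume "nd \<in> NN r p e"
    then obtain i j where ij: "i < r" "1 \<le> j" "j \<le> e i" "nd = node r p i j" by (auto simp: NN_mem)
    then have "j \<le> f i" using ef by (auto simp: le_fun_def intro: le_trans)
    then show "nd \<in> NN r p f" unfolding NN_mem using ij by blast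
  qed
qed

lemma card_NN_less:
  assumes "e \<in> E0 r p" "f \<in> E0 r p" "e < f"
  shows "card (NN r p e) < card (NN r p f)"
proof -
  have "NN r p e \<subset> NN r p f" using NN_mono_iff[OF assms(1,2)] NN_mono_iff[OF assms(2,1)] assms(3)
    by (auto simp: less_le_not_le)
  then show ?thesis by (simp add: finite_NN psubset_card_mono)
qed

lemma step:
  assumes hp: "\<forall>k. k + 1 < r \<longrightarrow> p k \<ge> 1"
    and eE: "e \<in> E0 r p" and fE: "f \<in> E0 r p" and ef: "e < f"
  shows "\<exists>g\<in>E0 r p. e < g \<and> g \<le> f \<and> card (NN r p g) = Suc (card (NN r p e))"
proof -
  have ade: "adj r p e" and adf: "adj r p f" using eE fE by (simp_all add: E0_def)
  have ve: "e \<in> vecs r" and vf: "f \<in> vecs r" using eE fE by (simp_all add: E0_def)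
  obtain i0 where i0: "i0 < r" "e i0 < f i0"
  proof -
    obtain h where "e h \<noteq> f h" using ef by (auto simp: less_fun_def le_fun_def) (metis order.antisym ext)
    moreover have "e h \<le> f h" using ef by (simp add: less_fun_def le_fun_def)
    moreover have "h < r"
    proof (rule ccontr)
      assume "\<not> h < r" then have "e h = 0" "f h = 0" using ve vf by (auto simp: vecs_def)
      then show False using calculation by simp
    qed
    ultimately show ?thesis using that by simp
  qed
  define Q where "Q j \<longleftrightarrow> (\<exists>i<r. e i < j \<and> j \<le> f i)" for j
  have Q0: "Q (Suc (e i0))" using i0 by (auto simp: Q_def)
  define j where "j = (LEAST j. Q j)"
  have Qj: "Q j" unfolding j_def using Q0 by (rule LeastI)
  have jmin: "\<not> Q j'" if "j' < j" for j' using that not_less_Least unfolding j_def by blast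
  obtain i where i: "i < r" "e i < j" "j \<le> f i" using Qj by (auto simp: Q_def)
  have j1: "1 \<le> j" using i by simp
  define B where "B h \<longleftrightarrow> h < r \<and> conn p j i h" for h
  have eB: "e h = j - 1" if "B h" for h
  proof -
    have h: "h < r" "conn p j i h" using that by (auto simp: B_def)
    have "e h < j"
    proof (rule ccontr)
      assume "\<not> e h < j"
      then have "j \<le> e i" using propag[OF ade h(1) i(1) conn_sym[OF h(2)]] by simp
      then show False using i by simp
    qed
    moreover have "j \<le> f h" using propag[OF adf i(1) h(1) h(2) i(3)] .
    moreover have "\<not> e h < j - 1"
    proof
      assume "e h < j - 1"
      then have "Q (j - 1)" using h \<open>j \<le> f h\<close> by (auto simp: Q_def)
      then show False using jmin[of "j - 1"] j1 by simp
    qed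
    ultimately show ?thesis by simp
  qed
  have fB: "j \<le> f h" if "B h" for h
    using that propag[OF adf i(1) _ _ i(3)] by (auto simp: B_def)
  define g where "g h = (if B h then j else e h)" for h
  have vg: "g \<in> vecs r" using ve by (auto simp: vecs_def g_def B_def)
  have Bi: "B i" using i by (simp add: B_def conn_refl)
  have eg: "e \<le> g" unfolding le_fun_def g_def using eB by simp
  have egne: "e \<noteq> g" using Bi i by (metis g_def less_irrefl)
  have gf: "g \<le> f" unfolding le_fun_def g_def using fB ef by (auto simp: less_fun_def le_fun_def)
  have pos: "g = (\<lambda>_. 0) \<or> (\<forall>h<r. 1 \<le> g h)"
  proof (cases "e = (\<lambda>_. 0)")
    case True
    have "Q 1" using i0 True by (auto simp: Q_def)
    then have "j \<le> 1" unfolding j_def by (rule Least_le)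
    then have "j = 1" using j1 by simp
    then have "\<forall>h<r. B h" using conn_one[OF hp] i(1) by (auto simp: B_def)
    then show ?thesis using \<open>j = 1\<close> by (simp add: g_def)
  next
    case False
    then have "\<forall>h<r. 1 \<le> e h" using eE by (simp add: E0_def)
    then show ?thesis using eg by (auto simp: le_fun_def intro: le_trans)
  qed
  have adg: "adj r p g"
    unfolding adj_def
  proof (intro allI impI)
    fix k assume k: "Suc k < r"
    have ek: "min (e k) (p k) = min (e (Suc k)) (p k)" using ade k by (simp add: adj_def)
    show "min (g k) (p k) = min (g (Suc k)) (p k)"
    proof (cases "B k = B (Suc k)")
      case True then show ?thesis using ek by (simp add: g_def)
    next
      case False
      have npk: "\<not> j \<le> p k"
      proof
        assume "j \<le> p k"
        then have c: "conn p j k (Suc k)" by (simp add: conn_Suc)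
        have "B k \<longleftrightarrow> B (Suc k)" using k conn_trans[OF _ c] conn_trans[OF _ conn_sym[OF c]]
          by (auto simp: B_def)
        then show False using False by simp
      qed
      show ?thesis
      proof (cases "B k")
        case True
        then have "\<not> B (Suc k)" using False by simp
        then show ?thesis using True eB[OF True] ek npk by (simp add: g_def)
      next
        case F2: False
        then have "B (Suc k)" using False by simp
        then show ?thesis using F2 eB[OF \<open>B (Suc k)\<close>] ek npk by (simp add: g_def)
      qed
    qed
  qed
  have gE: "g \<in> E0 r p" using vg pos adg by (simp add: E0_def)
  have NNg: "NN r p g = insert (node r p i j) (NN r p e)"
  proof
    show "NN r p g \<subseteq> insert (node r p i j) (NN r p e)"
    proof
      fix nd assume "nd \<in> NN r p g"
      then obtain h j' where h: "h < r" "1 \<le> j'" "j' \<le> g h" "nd = node r p h j'" by (auto simp: NN_mem)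
      show "nd \<in> insert (node r p i j) (NN r p e)"
      proof (cases "B h \<and> j' = j")
        case True
        then have "nd = node r p i j" using h node_eq[OF h(1) i(1)] conn_sym by (auto simp: B_def)
        then show ?thesis by simp
      next
        case False
        then have "j' \<le> e h" using h eB by (auto simp: g_def split: if_splits)
        then show ?thesis using h by (auto simp: NN_mem)
      qed
    qed
  next
    have "node r p i j \<in> NN r p g" using NN_iff[OF adg i(1) j1] Bi by (simp add: g_def)
    moreover have "NN r p e \<subseteq> NN r p g" using NN_mono_iff[OF eE gE] eg by simp
    ultimately show "insert (node r p i j) (NN r p e) \<subseteq> NN r p g" by simp
  qed
  have "node r p i j \<notin> NN r p e" using NN_iff[OF ade i(1) j1] i by simp
  then have "card (NN r p g) = Suc (card (NN r p e))" using NNg by (simp add: finite_NN)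
  then show ?thesis using gE eg egne gf by (auto simp: less_le)
qed

lemma cover_card:
  assumes hM: "\<forall>k<r. multiplicity_sequence (M k)" and hp: "\<forall>k. k + 1 < r \<longrightarrow> p k \<ge> 1"
    and eE: "e \<in> E0 r p" and fE: "f \<in> E0 r p" and ef: "e < f"
    and nob: "\<not> (\<exists>t\<in>lval r M ` E0 r p. lval r M e < t \<and> t < lval r M f)"
  shows "card (NN r p f) = Suc (card (NN r p e))"
proof (rule ccontr)
  assume ne: "card (NN r p f) \<noteq> Suc (card (NN r p e))"
  obtain g where g: "g \<in> E0 r p" "e < g" "g \<le> f" "card (NN r p g) = Suc (card (NN r p e))"
    using step[OF hp eE fE ef] by blast
  then have "g \<noteq> f" using ne by auto
  then have "g < f" using g by (simp add: less_le)
  have v: "e \<in> vecs r" "f \<in> vecs r" "g \<in> vecs r" using eE fE g(1) by (simp_all add: E0_def)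
  have "lval r M e < lval r M g" "lval r M g < lval r M f"
    using lval_less_iff[OF hM v(1) v(3)] lval_less_iff[OF hM v(3) v(2)] g(2) \<open>g < f\<close> by simp_all
  then show False using nob g(1) by blast
qed

definition chain_ok :: "(nat \<Rightarrow> nat) set \<Rightarrow> nat \<Rightarrow> (nat \<Rightarrow> nat \<Rightarrow> nat) \<Rightarrow> bool" where
  "chain_ok S n s \<longleftrightarrow> (\<forall>i\<le>n. s i \<in> S) \<and>
     (\<forall>i<n. s i < s (Suc i) \<and> \<not> (\<exists>t\<in>S. s i < t \<and> t < s (Suc i)))"

lemma chain_ex:
  assumes hM: "\<forall>k<r. multiplicity_sequence (M k)" and hp: "\<forall>k. k + 1 < r \<longrightarrow> p k \<ge> 1"
    and fE: "f \<in> E0 r p"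
  shows "e \<in> E0 r p \<Longrightarrow> e \<le> f \<Longrightarrow> card (NN r p f) = card (NN r p e) + k \<Longrightarrow>
    \<exists>s. s 0 = lval r M e \<and> s k = lval r M f \<and> chain_ok (lval r M ` E0 r p) k s"
proof (induction k arbitrary: e)
  case 0
  have "NN r p e \<subseteq> NN r p f" using NN_mono_iff[OF 0(1) fE] 0(2) by simp
  then have "NN r p e = NN r p f" using 0(3) finite_NN by (metis add_0_right card_subset_eq)
  then have "f \<le> e" using NN_mono_iff[OF fE 0(1)] by simp
  then have "e = f" using 0(2) by simp
  then show ?case using 0(1) by (intro exI[of _ "\<lambda>_. lval r M e"]) (auto simp: chain_ok_def)
next
  case (Suc k)
  have "e \<noteq> f" using Suc.prems(3) by auto
  then have ef: "e < f" using Suc.prems(2) by (simp add: less_le)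
  obtain g where g: "g \<in> E0 r p" "e < g" "g \<le> f" "card (NN r p g) = Suc (card (NN r p e))"
    using step[OF hp Suc.prems(1) fE ef] by blast
  have "card (NN r p f) = card (NN r p g) + k" using g(4) Suc.prems(3) by simp
  then obtain s' where s': "s' 0 = lval r M g" "s' k = lval r M f" "chain_ok (lval r M ` E0 r p) k s'"
    using Suc.IH[OF g(1) g(3)] by blast
  define s where "s i = (if i = 0 then lval r M e else s' (i - 1))" for i
  have ve: "e \<in> vecs r" "g \<in> vecs r" using Suc.prems(1) g(1) by (simp_all add: E0_def)
  have first: "s 0 < s (Suc 0) \<and> \<not> (\<exists>t\<in>lval r M ` E0 r p. s 0 < t \<and> t < s (Suc 0))"
  proof
    show "s 0 < s (Suc 0)" using lval_less_iff[OF hM ve] g(2) s'(1) by (simp add: s_def)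
    show "\<not> (\<exists>t\<in>lval r M ` E0 r p. s 0 < t \<and> t < s (Suc 0))"
    proof
      assume "\<exists>t\<in>lval r M ` E0 r p. s 0 < t \<and> t < s (Suc 0)"
      then obtain h where h: "h \<in> E0 r p" "lval r M e < lval r M h" "lval r M h < lval r M g"
        using s'(1) by (auto simp: s_def)
      have vh: "h \<in> vecs r" using h(1) by (simp add: E0_def)
      have "e < h" "h < g" using h lval_less_iff[OF hM ve(1) vh] lval_less_iff[OF hM vh ve(2)] by simp_all
      then have "card (NN r p e) < card (NN r p h)" "card (NN r p h) < card (NN r p g)"
        using card_NN_less Suc.prems(1) h(1) g(1) by blast+
      then show False using g(4) by simp
    qed
  qed
  have "chain_ok (lval r M ` E0 r p) (Suc k) s"
    unfolding chain_ok_def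
  proof (intro conjI allI impI)
    fix i assume "i \<le> Suc k"
    then show "s i \<in> lval r M ` E0 r p"
      using s'(3) Suc.prems(1) by (cases i) (auto simp: s_def chain_ok_def)
  next
    fix i assume i: "i < Suc k"
    show "s i < s (Suc i)"
      using first s'(3) i by (cases i) (auto simp: s_def chain_ok_def)
    show "\<not> (\<exists>t\<in>lval r M ` E0 r p. s i < t \<and> t < s (Suc i))"
    proof (cases i)
      case 0 then show ?thesis using first by simp
    next
      case (Suc i') then show ?thesis using s'(3) i by (auto simp: s_def chain_ok_def)
    qed
  qed
  moreover have "s 0 = lval r M e" "s (Suc k) = lval r M f" by (simp_all add: s_def s'(2))
  ultimately show ?case by blast
qed

lemma chain_len:
  assumes r1: "r \<ge> 1" and hM: "\<forall>k<r. multiplicity_sequence (M k)" and hp: "\<forall>k. k + 1 < r \<longrightarrow> p k \<ge> 1"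
    and LE: "L \<in> E0 r p"
  shows "(SOME n. \<exists>s. sat_chain (tree_semigroup r M p) n s (lval r M L)) = card (NN r p L)"
proof -
  have S: "tree_semigroup r M p = lval r M ` E0 r p" using S_char[OF r1 hp] .
  have z: "(\<lambda>_. 0::nat) \<in> E0 r p" by (simp add: E0_def vecs_def adj_def)
  have zl: "(\<lambda>_. 0::nat) \<le> L" by (simp add: le_fun_def)
  show ?thesis
  proof (rule some_equality)
    obtain s where s: "s 0 = lval r M (\<lambda>_. 0)" "s (card (NN r p L)) = lval r M L"
        "chain_ok (lval r M ` E0 r p) (card (NN r p L)) s"
      using chain_ex[OF hM hp LE z zl, of "card (NN r p L)"] by (auto simp: NN_zero)
    have "sat_chain (lval r M ` E0 r p) (card (NN r p L)) s (lval r M L)"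
      unfolding sat_chain_def
    proof (intro conjI)
      show "s 0 = (\<lambda>_. 0)" using s(1) lval_zero by metis
      show "s (card (NN r p L)) = lval r M L" by (rule s(2))
      show "\<forall>i\<le>card (NN r p L). s i \<in> lval r M ` E0 r p" using s(3) unfolding chain_ok_def by blast
      show "\<forall>i<card (NN r p L). s i < s (Suc i) \<and> \<not> (\<exists>t\<in>lval r M ` E0 r p. s i < t \<and> t < s (Suc i))"
        using s(3) unfolding chain_ok_def by blast
    qed
    then have "sat_chain (tree_semigroup r M p) (card (NN r p L)) s (lval r M L)" using S by simp
    then show "\<exists>s. sat_chain (tree_semigroup r M p) (card (NN r p L)) s (lval r M L)" by blast
  next
    fix n assume "\<exists>s. sat_chain (tree_semigroup r M p) n s (lval r M L)"
    then obtain s where s: "sat_chain (lval r M ` E0 r p) n s (lval r M L)" using S by auto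
    define es where "es i = (SOME e. e \<in> E0 r p \<and> s i = lval r M e)" for i
    have es: "es i \<in> E0 r p \<and> s i = lval r M (es i)" if "i \<le> n" for i
    proof -
      have "s i \<in> lval r M ` E0 r p" using s that by (simp add: sat_chain_def)
      then have "\<exists>e. e \<in> E0 r p \<and> s i = lval r M e" by blast
      then show ?thesis unfolding es_def by (rule someI_ex)
    qed
    have vv: "es i \<in> vecs r" if "i \<le> n" for i using es[OF that] by (simp add: E0_def)
    have stepc: "card (NN r p (es (Suc i))) = Suc (card (NN r p (es i)))" if "i < n" for i
    proof -
      have a: "s i < s (Suc i)" "\<not> (\<exists>t\<in>lval r M ` E0 r p. s i < t \<and> t < s (Suc i))"
        using s that by (auto simp: sat_chain_def)
      have "es i < es (Suc i)" using a(1) es[of i] es[of "Suc i"] that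
          lval_less_iff[OF hM vv[of i] vv[of "Suc i"]] by simp
      then show ?thesis using cover_card[OF hM hp, of "es i" "es (Suc i)"] es[of i] es[of "Suc i"] that a(2)
        by simp
    qed
    have cnt: "i \<le> n \<Longrightarrow> card (NN r p (es i)) = i + card (NN r p (es 0))" for i
    proof (induction i)
      case 0 show ?case by simp
    next
      case (Suc i)
      have "card (NN r p (es i)) = i + card (NN r p (es 0))" using Suc.IH Suc.prems by simp
      moreover have "card (NN r p (es (Suc i))) = Suc (card (NN r p (es i)))" using stepc[of i] Suc.prems by simp
      ultimately show ?case by simp
    qed
    have cn: "card (NN r p (es n)) = n + card (NN r p (es 0))" by (rule cnt) simp
    have "lval r M (es 0) = lval r M (\<lambda>_. 0)" using es[of 0] s lval_zero by (simp add: sat_chain_def)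
    then have "es 0 = (\<lambda>_. 0)" using lval_inj[OF hM vv[of 0]] z by (simp add: E0_def)
    moreover have "lval r M (es n) = lval r M L" using es[of n] s by (simp add: sat_chain_def)
    then have "es n = L" using lval_inj[OF hM vv[of n]] LE by (simp add: E0_def)
    ultimately show "n = card (NN r p L)" using cn by (simp add: NN_zero)
  qed
qed

lemma card_count:
  assumes r1: "r \<ge> 1" and eE: "e \<in> E0 r p"
    and ge: "\<forall>i. 0 < i \<longrightarrow> i < r \<longrightarrow> p (i - 1) \<le> e i"
  shows "card (NN r p e) + (\<Sum>k<r-1. p k) = (\<Sum>h<r. e h)"
proof -
  have ad: "adj r p e" using eE by (simp add: E0_def)
  define C where "C i = {j \<in> {1..e i}. i = 0 \<or> p (i - 1) < j}" for i
  define D where "D = (SIGMA i:{..<r}. C i)"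
  define F where "F = (\<lambda>(i,j). node r p i j)"
  have inj: "inj_on F D"
  proof (rule inj_onI)
    fix x y assume x: "x \<in> D" and y: "y \<in> D" and eq: "F x = F y"
    obtain i j where xi: "x = (i, j)" by (cases x)
    obtain i' j' where yi: "y = (i', j')" by (cases y)
    have ir: "i < r" "i' < r" using x y xi yi by (auto simp: D_def)
    have jj: "j = j'" and c: "conn p j i i'" using eq node_eq[OF ir] by (auto simp: F_def xi yi)
    have nlt: False if "a < b" "conn p j a b" "(a, j) \<in> D" "(b, j) \<in> D" for a b
    proof -
      have "min a b \<le> b - 1 \<and> b - 1 < max a b" using that(1) by simp
      then have "j \<le> p (b - 1)" using that(2) unfolding conn_def by blast
      moreover have "p (b - 1) < j" using that(1,4) by (auto simp: D_def C_def)
      ultimately show False by simp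
    qed
    have "i = i'"
    proof (rule ccontr)
      assume "i \<noteq> i'"
      then consider "i < i'" | "i' < i" by linarith
      then show False
      proof cases
        case 1 then show False using nlt[of i i'] c x y xi yi jj by simp
      next
        case 2 then show False using nlt[of i' i] conn_sym[OF c] x y xi yi jj by simp
      qed
    qed
    then show "x = y" using xi yi jj by simp
  qed
  have img: "F ` D = NN r p e"
  proof
    show "F ` D \<subseteq> NN r p e"
    proof
      fix nd assume "nd \<in> F ` D"
      then obtain i j where "i < r" "1 \<le> j" "j \<le> e i" "nd = node r p i j"
        by (auto simp: D_def C_def F_def)
      then show "nd \<in> NN r p e" unfolding NN_mem by blast
    qed
  next
    show "NN r p e \<subseteq> F ` D"
    proof
      fix nd assume "nd \<in> NN r p e"
      then obtain i j where ij: "i < r" "1 \<le> j" "j \<le> e i" "nd = node r p i j" by (auto simp: NN_mem)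
      define i0 where "i0 = (LEAST h. conn p j h i)"
      have c0: "conn p j i0 i" unfolding i0_def by (rule LeastI[of _ i]) (rule conn_refl)
      have i0i: "i0 \<le> i" unfolding i0_def by (rule Least_le) (rule conn_refl)
      then have i0r: "i0 < r" using ij by simp
      have je: "j \<le> e i0" using propag[OF ad ij(1) i0r conn_sym[OF c0] ij(3)] .
      have cond: "i0 = 0 \<or> p (i0 - 1) < j"
      proof (rule ccontr)
        assume "\<not> (i0 = 0 \<or> p (i0 - 1) < j)"
        then have a: "0 < i0" "j \<le> p (i0 - 1)" by auto
        have "conn p j (i0 - 1) i0" using conn_Suc[of p j "i0 - 1"] a by simp
        then have "conn p j (i0 - 1) i" using c0 conn_trans by blast
        then have "i0 \<le> i0 - 1" unfolding i0_def by (rule Least_le)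
        then show False using a by simp
      qed
      have "node r p i0 j = node r p i j" using node_eq[OF i0r ij(1)] c0 by simp
      moreover have "(i0, j) \<in> D" using i0r ij je cond by (auto simp: D_def C_def)
      ultimately show "nd \<in> F ` D" using ij by (force simp: F_def)
    qed
  qed
  have "card (NN r p e) = card D" using inj img by (metis card_image)
  also have "card D = (\<Sum>i<r. card (C i))" unfolding D_def by (simp add: C_def)
  finally have cD: "card (NN r p e) = (\<Sum>i<r. card (C i))" .
  have "C 0 = {1..e 0}" by (auto simp: C_def)
  then have C0: "card (C 0) = e 0" by simp
  have CS: "card (C (Suc i)) = e (Suc i) - p i" for i
  proof -
    have "C (Suc i) = {Suc (p i)..e (Suc i)}" by (auto simp: C_def)
    then show ?thesis by simp
  qed
  obtain r' where r': "r = Suc r'" using r1 by (cases r) auto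
  have "(\<Sum>i<r. card (C i)) = e 0 + (\<Sum>i<r'. e (Suc i) - p i)"
    unfolding r' sum.lessThan_Suc_shift using C0 CS by simp
  moreover have "(\<Sum>i<r'. e (Suc i) - p i) + (\<Sum>k<r'. p k) = (\<Sum>i<r'. e (Suc i))"
  proof -
    have "(\<Sum>i<r'. e (Suc i) - p i) + (\<Sum>k<r'. p k) = (\<Sum>i<r'. e (Suc i) - p i + p i)"
      by (simp add: sum.distrib)
    also have "\<dots> = (\<Sum>i<r'. e (Suc i))"
      using ge r' by (intro sum.cong) auto
    finally show ?thesis .
  qed
  moreover have "(\<Sum>h<r. e h) = e 0 + (\<Sum>i<r'. e (Suc i))" unfolding r' by (rule sum.lessThan_Suc_shift)
  moreover have "r - 1 = r'" using r' by simp
  ultimately show ?thesis using cD by simp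
qed

theorem mainTheorem1:
  fixes r :: nat and M :: "nat \<Rightarrow> nat \<Rightarrow> nat" and p :: "nat \<Rightarrow> nat"
  assumes "r \<ge> 1"
    and "\<forall>k<r. multiplicity_sequence (M k)"
    and "\<forall>k. k + 1 < r \<longrightarrow> p k \<ge> 1"
    and "good_semigroup r (tree_semigroup r M p)"
    and "local_sg r (tree_semigroup r M p)"
    and "arf_sg (tree_semigroup r M p)"
  shows "good_genus r (tree_semigroup r M p)
           = (\<Sum>k<r. ns_genus (AS (M k))) + (\<Sum>k<r-1. p k)"
proof -
  note r1 = assms(1) and hM = assms(2) and hp = assms(3)
  define L where "L = Lv r M p"
  have LE: "L \<in> E0 r p" using Lv_E0[OF hp] by (simp add: L_def)
  have cond: "conductor r (tree_semigroup r M p) = lval r M L"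
    using conductor_eq[OF r1 hM hp] by (simp add: L_def)
  have ch: "(SOME n. \<exists>s. sat_chain (tree_semigroup r M p) n s (lval r M L))
      = card (NN r p L)"
    using chain_len[OF r1 hM hp LE] .
  have gg: "good_genus r (tree_semigroup r M p) = (\<Sum>k<r. lval r M L k) - card (NN r p L)"
    unfolding good_genus_def cond ch ..
  have sgL: "lval r M L k = ns_genus (AS (M k)) + L k" if "k < r" for k
  proof -
    have ms: "multiplicity_sequence (M k)" using hM that by simp
    define l where "l = ms_length (M k)"
    have lL: "l \<le> L k" using Lv_ge(1)[OF that] by (simp add: L_def l_def)
    have "sg (M k) (L k) = sg (M k) (l + (L k - l))" using lL by simp
    also have "\<dots> = sg (M k) l + (L k - l)" using sg_tail[OF ms] by (simp add: l_def)
    finally have "sg (M k) (L k) = sg (M k) l + (L k - l)" .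
    moreover have "l \<le> sg (M k) l" using sg_ge[OF ms] .
    moreover have "ns_genus (AS (M k)) = sg (M k) l - l" using ns_genus_AS[OF ms] by (simp add: l_def)
    ultimately show ?thesis using that lL by (simp add: lval_def)
  qed
  have s1: "(\<Sum>k<r. lval r M L k) = (\<Sum>k<r. ns_genus (AS (M k))) + (\<Sum>k<r. L k)"
    using sgL by (simp add: sum.distrib)
  have ge: "\<forall>i. 0 < i \<longrightarrow> i < r \<longrightarrow> p (i - 1) \<le> L i"
    using Lv_ge(2) by (simp add: L_def)
  have cc: "card (NN r p L) + (\<Sum>k<r-1. p k) = (\<Sum>h<r. L h)"
    using card_count[OF r1 LE ge] .
  show ?thesis using gg s1 cc by simp
qed

end
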